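(* (1) Let $f_1:G_1\to H_1$ and $f_2:G_2\to H_2$ be group homomorphisms and let $f_1\times f_2:G_1\times G_2\to H_1\times H_2$ be $(a_1,a_2)\mapsto (f_1(a_1),f_2(a_2))$. If $f_1$ does not admit a global section, then $\mathrm{sec}(f_1)\leq \mathrm{sec}(f_1\times f_2)$; likewise, if $f_2$ does not admit a global section, then $\mathrm{sec}(f_2)\leq \mathrm{sec}(f_1\times f_2)$. (2) Let $f:G\to H$ be a group homomorphism and $K$ a group. Then $\mathrm{sec}(f\times\mathrm{id}_K)\leq \mathrm{sec}(f)$, with equality whenever $f$ does not admit a global section.
   Context: For a homomorphism $f:G\to H$ and a subgroup $L\le H$, a local section of $f$ on $L$ is a homomorphism $s:L\to G$ with $f\circ s=\mathrm{incl}_L$ (the inclusion $L\hookrightarrow H$); a global section is a local section on $L=H$. The sectional number $\mathrm{sec}(f)$ is the least positive integer $m$ such that there exist proper subgroups $H_1,\ldots,H_m$ of $H$ with $H=H_1\cup\cdots\cup H_m$ and such that $f$ admits a local section on each $H_i$; $\mathrm{sec}(f)=\infty$ if no such $m$ exists. *)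

theory Defs
  imports "HOL-Algebra.Algebra" "HOL-Library.Extended_Nat"
begin

definition local_section ::
  "('a, 'm) monoid_scheme \<Rightarrow> ('b, 'n) monoid_scheme \<Rightarrow> ('a \<Rightarrow> 'b) \<Rightarrow> 'b set \<Rightarrow> ('b \<Rightarrow> 'a) \<Rightarrow> bool"
  where "local_section G H f L s \<longleftrightarrow>
           s \<in> hom (H\<lparr>carrier := L\<rparr>) G \<and> (\<forall>x\<in>L. f (s x) = x)"

definition global_section ::
  "('a, 'm) monoid_scheme \<Rightarrow> ('b, 'n) monoid_scheme \<Rightarrow> ('a \<Rightarrow> 'b) \<Rightarrow> ('b \<Rightarrow> 'a) \<Rightarrow> bool"
  where "global_section G H f s \<longleftrightarrow> local_section G H f (carrier H) s"

definition sec_cover ::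
  "('a, 'm) monoid_scheme \<Rightarrow> ('b, 'n) monoid_scheme \<Rightarrow> ('a \<Rightarrow> 'b) \<Rightarrow> nat \<Rightarrow> bool"
  where "sec_cover G H f m \<longleftrightarrow> m > 0 \<and>
     (\<exists>Hs :: nat \<Rightarrow> 'b set.
        (\<forall>i<m. subgroup (Hs i) H \<and> Hs i \<noteq> carrier H \<and> (\<exists>s. local_section G H f (Hs i) s))
        \<and> (\<Union>i<m. Hs i) = carrier H)"

definition sectional_number ::
  "('a, 'm) monoid_scheme \<Rightarrow> ('b, 'n) monoid_scheme \<Rightarrow> ('a \<Rightarrow> 'b) \<Rightarrow> enat"
  where "sectional_number G H f =
     (if \<exists>m. sec_cover G H f m then enat (LEAST m. sec_cover G H f m) else \<infinity>)"

definition prod_map :: "('a \<Rightarrow> 'b) \<Rightarrow> ('c \<Rightarrow> 'd) \<Rightarrow> ('a \<times> 'c \<Rightarrow> 'b \<times> 'd)"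
  where "prod_map f g = (\<lambda>(a, c). (f a, g c))"

end

theory Submission
  imports Defs
begin

lemma sec_mono:
  assumes "\<And>m. sec_cover A B f m \<Longrightarrow> sec_cover C D g m"
  shows "sectional_number C D g \<le> sectional_number A B f"
proof (cases "\<exists>m. sec_cover A B f m")
  case True
  define m0 where "m0 = (LEAST m. sec_cover A B f m)"
  have a: "sec_cover A B f m0" unfolding m0_def using True by (meson LeastI)
  hence b: "sec_cover C D g m0" by (rule assms)
  hence "(LEAST m. sec_cover C D g m) \<le> m0" by (rule Least_le)
  thus ?thesis using True b unfolding sectional_number_def m0_def by auto
next
  case False
  thus ?thesis unfolding sectional_number_def by auto
qed

lemma part1a:
  assumes G1: "group G1" and H1: "group H1" and G2: "group G2" and H2: "group H2"
    and ng: "\<not> (\<exists>s. global_section G1 H1 f1 s)"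
    and sc: "sec_cover (G1 \<times>\<times> G2) (H1 \<times>\<times> H2) (prod_map f1 f2) m"
  shows "sec_cover G1 H1 f1 m"
proof -
  interpret H1: group H1 by fact
  interpret H2: group H2 by fact
  obtain Hs where Hs: "\<forall>i<m. subgroup (Hs i) (H1 \<times>\<times> H2) \<and> Hs i \<noteq> carrier (H1 \<times>\<times> H2)
      \<and> (\<exists>s. local_section (G1 \<times>\<times> G2) (H1 \<times>\<times> H2) (prod_map f1 f2) (Hs i) s)"
    and U: "(\<Union>i<m. Hs i) = carrier (H1 \<times>\<times> H2)" and m0: "m > 0"
    using sc unfolding sec_cover_def by blast
  define M where "M i = {h \<in> carrier H1. (h, \<one>\<^bsub>H2\<^esub>) \<in> Hs i}" for i
  have "\<forall>i<m. subgroup (M i) H1 \<and> M i \<noteq> carrier H1 \<and> (\<exists>s. local_section G1 H1 f1 (M i) s)"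
  proof (intro allI impI)
    fix i assume i: "i < m"
    have sg: "subgroup (Hs i) (H1 \<times>\<times> H2)" using Hs i by blast
    obtain s where s: "local_section (G1 \<times>\<times> G2) (H1 \<times>\<times> H2) (prod_map f1 f2) (Hs i) s"
      using Hs i by blast
    have shom: "s \<in> hom ((H1 \<times>\<times> H2)\<lparr>carrier := Hs i\<rparr>) (G1 \<times>\<times> G2)"
      and sinv: "\<forall>x\<in>Hs i. prod_map f1 f2 (s x) = x"
      using s unfolding local_section_def by auto
    have smul: "s (x \<otimes>\<^bsub>H1 \<times>\<times> H2\<^esub> y) = s x \<otimes>\<^bsub>G1 \<times>\<times> G2\<^esub> s y" if "x \<in> Hs i" "y \<in> Hs i" for x y
      using shom that unfolding hom_def by auto
    have scar: "s x \<in> carrier G1 \<times> carrier G2" if "x \<in> Hs i" for x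
      using shom that unfolding hom_def by auto
    have subM: "subgroup (M i) H1"
    proof (rule H1.subgroupI)
      show "M i \<subseteq> carrier H1" unfolding M_def by auto
      show "M i \<noteq> {}" using subgroup.one_closed[OF sg] unfolding M_def by auto
      fix a assume a: "a \<in> M i"
      hence "inv\<^bsub>H1 \<times>\<times> H2\<^esub> (a, \<one>\<^bsub>H2\<^esub>) \<in> Hs i"
        unfolding M_def by (intro subgroup.m_inv_closed[OF sg]) auto
      moreover have "a \<in> carrier H1" using a unfolding M_def by auto
      ultimately show "inv\<^bsub>H1\<^esub> a \<in> M i" unfolding M_def
        using inv_DirProd[OF H1 H2 \<open>a \<in> carrier H1\<close> H2.one_closed] by simp
    next
      fix a b assume "a \<in> M i" "b \<in> M i"
      hence "(a, \<one>\<^bsub>H2\<^esub>) \<otimes>\<^bsub>H1 \<times>\<times> H2\<^esub> (b, \<one>\<^bsub>H2\<^esub>) \<in> Hs i"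
        unfolding M_def by (intro subgroup.m_closed[OF sg]) auto
      thus "a \<otimes>\<^bsub>H1\<^esub> b \<in> M i" using \<open>a \<in> M i\<close> \<open>b \<in> M i\<close> unfolding M_def by simp
    qed
    define t where "t h = fst (s (h, \<one>\<^bsub>H2\<^esub>))" for h
    have tsec: "local_section G1 H1 f1 (M i) t"
      unfolding local_section_def
    proof (intro conjI ballI)
      show "t \<in> hom (H1\<lparr>carrier := M i\<rparr>) G1"
      proof (rule homI)
        fix x assume "x \<in> carrier (H1\<lparr>carrier := M i\<rparr>)"
        thus "t x \<in> carrier G1" using scar unfolding t_def M_def by force
      next
        fix x y assume xy: "x \<in> carrier (H1\<lparr>carrier := M i\<rparr>)" "y \<in> carrier (H1\<lparr>carrier := M i\<rparr>)"
        hence "s ((x, \<one>\<^bsub>H2\<^esub>) \<otimes>\<^bsub>H1 \<times>\<times> H2\<^esub> (y, \<one>\<^bsub>H2\<^esub>)) = s (x, \<one>\<^bsub>H2\<^esub>) \<otimes>\<^bsub>G1 \<times>\<times> G2\<^esub> s (y, \<one>\<^bsub>H2\<^esub>)"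
          unfolding M_def by (intro smul) auto
        thus "t (x \<otimes>\<^bsub>H1\<lparr>carrier := M i\<rparr>\<^esub> y) = t x \<otimes>\<^bsub>G1\<^esub> t y"
          unfolding t_def by (simp add: mult_DirProd')
      qed
    next
      fix x assume "x \<in> M i"
      hence "prod_map f1 f2 (s (x, \<one>\<^bsub>H2\<^esub>)) = (x, \<one>\<^bsub>H2\<^esub>)" using sinv unfolding M_def by auto
      thus "f1 (t x) = x" unfolding t_def prod_map_def by (auto split: prod.splits)
    qed
    have "M i \<noteq> carrier H1"
    proof
      assume "M i = carrier H1"
      thus False using ng tsec unfolding global_section_def by auto
    qed
    thus "subgroup (M i) H1 \<and> M i \<noteq> carrier H1 \<and> (\<exists>s. local_section G1 H1 f1 (M i) s)"
      using subM tsec by blast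
  qed
  moreover have "(\<Union>i<m. M i) = carrier H1"
    using U unfolding M_def by auto
  ultimately show ?thesis unfolding sec_cover_def using m0 by blast
qed

lemma part1b:
  assumes G1: "group G1" and H1: "group H1" and G2: "group G2" and H2: "group H2"
    and ng: "\<not> (\<exists>s. global_section G2 H2 f2 s)"
    and sc: "sec_cover (G1 \<times>\<times> G2) (H1 \<times>\<times> H2) (prod_map f1 f2) m"
  shows "sec_cover G2 H2 f2 m"
proof -
  interpret H1: group H1 by fact
  interpret H2: group H2 by fact
  obtain Hs where Hs: "\<forall>i<m. subgroup (Hs i) (H1 \<times>\<times> H2) \<and> Hs i \<noteq> carrier (H1 \<times>\<times> H2)
      \<and> (\<exists>s. local_section (G1 \<times>\<times> G2) (H1 \<times>\<times> H2) (prod_map f1 f2) (Hs i) s)"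
    and U: "(\<Union>i<m. Hs i) = carrier (H1 \<times>\<times> H2)" and m0: "m > 0"
    using sc unfolding sec_cover_def by blast
  define M where "M i = {h \<in> carrier H2. (\<one>\<^bsub>H1\<^esub>, h) \<in> Hs i}" for i
  have "\<forall>i<m. subgroup (M i) H2 \<and> M i \<noteq> carrier H2 \<and> (\<exists>s. local_section G2 H2 f2 (M i) s)"
  proof (intro allI impI)
    fix i assume i: "i < m"
    have sg: "subgroup (Hs i) (H1 \<times>\<times> H2)" using Hs i by blast
    obtain s where s: "local_section (G1 \<times>\<times> G2) (H1 \<times>\<times> H2) (prod_map f1 f2) (Hs i) s"
      using Hs i by blast
    have shom: "s \<in> hom ((H1 \<times>\<times> H2)\<lparr>carrier := Hs i\<rparr>) (G1 \<times>\<times> G2)"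
      and sinv: "\<forall>x\<in>Hs i. prod_map f1 f2 (s x) = x"
      using s unfolding local_section_def by auto
    have smul: "s (x \<otimes>\<^bsub>H1 \<times>\<times> H2\<^esub> y) = s x \<otimes>\<^bsub>G1 \<times>\<times> G2\<^esub> s y" if "x \<in> Hs i" "y \<in> Hs i" for x y
      using shom that unfolding hom_def by auto
    have scar: "s x \<in> carrier G1 \<times> carrier G2" if "x \<in> Hs i" for x
      using shom that unfolding hom_def by auto
    have subM: "subgroup (M i) H2"
    proof (rule H2.subgroupI)
      show "M i \<subseteq> carrier H2" unfolding M_def by auto
      show "M i \<noteq> {}" using subgroup.one_closed[OF sg] unfolding M_def by auto
      fix a assume a: "a \<in> M i"
      hence "inv\<^bsub>H1 \<times>\<times> H2\<^esub> (\<one>\<^bsub>H1\<^esub>, a) \<in> Hs i"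
        unfolding M_def by (intro subgroup.m_inv_closed[OF sg]) auto
      moreover have "a \<in> carrier H2" using a unfolding M_def by auto
      ultimately show "inv\<^bsub>H2\<^esub> a \<in> M i" unfolding M_def
        using inv_DirProd[OF H1 H2 H1.one_closed \<open>a \<in> carrier H2\<close>] by simp
    next
      fix a b assume "a \<in> M i" "b \<in> M i"
      hence "(\<one>\<^bsub>H1\<^esub>, a) \<otimes>\<^bsub>H1 \<times>\<times> H2\<^esub> (\<one>\<^bsub>H1\<^esub>, b) \<in> Hs i"
        unfolding M_def by (intro subgroup.m_closed[OF sg]) auto
      thus "a \<otimes>\<^bsub>H2\<^esub> b \<in> M i" using \<open>a \<in> M i\<close> \<open>b \<in> M i\<close> unfolding M_def by simp
    qed
    define t where "t h = snd (s (\<one>\<^bsub>H1\<^esub>, h))" for h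
    have tsec: "local_section G2 H2 f2 (M i) t"
      unfolding local_section_def
    proof (intro conjI ballI)
      show "t \<in> hom (H2\<lparr>carrier := M i\<rparr>) G2"
      proof (rule homI)
        fix x assume "x \<in> carrier (H2\<lparr>carrier := M i\<rparr>)"
        thus "t x \<in> carrier G2" using scar unfolding t_def M_def by force
      next
        fix x y assume xy: "x \<in> carrier (H2\<lparr>carrier := M i\<rparr>)" "y \<in> carrier (H2\<lparr>carrier := M i\<rparr>)"
        hence "s ((\<one>\<^bsub>H1\<^esub>, x) \<otimes>\<^bsub>H1 \<times>\<times> H2\<^esub> (\<one>\<^bsub>H1\<^esub>, y)) = s (\<one>\<^bsub>H1\<^esub>, x) \<otimes>\<^bsub>G1 \<times>\<times> G2\<^esub> s (\<one>\<^bsub>H1\<^esub>, y)"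
          unfolding M_def by (intro smul) auto
        thus "t (x \<otimes>\<^bsub>H2\<lparr>carrier := M i\<rparr>\<^esub> y) = t x \<otimes>\<^bsub>G2\<^esub> t y"
          unfolding t_def by (simp add: mult_DirProd')
      qed
    next
      fix x assume "x \<in> M i"
      hence "prod_map f1 f2 (s (\<one>\<^bsub>H1\<^esub>, x)) = (\<one>\<^bsub>H1\<^esub>, x)" using sinv unfolding M_def by auto
      thus "f2 (t x) = x" unfolding t_def prod_map_def by (auto split: prod.splits)
    qed
    have "M i \<noteq> carrier H2"
    proof
      assume "M i = carrier H2"
      thus False using ng tsec unfolding global_section_def by auto
    qed
    thus "subgroup (M i) H2 \<and> M i \<noteq> carrier H2 \<and> (\<exists>s. local_section G2 H2 f2 (M i) s)"
      using subM tsec by blast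
  qed
  moreover have "(\<Union>i<m. M i) = carrier H2"
    using U unfolding M_def by auto
  ultimately show ?thesis unfolding sec_cover_def using m0 by blast
qed


lemma part2:
  fixes H :: "('h, 'mh) monoid_scheme" and K :: "('k, 'mk) monoid_scheme"
  assumes G: "group G" and H: "group H" and K: "group K"
    and sc: "sec_cover G H f m"
  shows "sec_cover (G \<times>\<times> K) (H \<times>\<times> K) (prod_map f (\<lambda>x. x)) m"
proof -
  interpret K: group K by fact
  obtain Hs where Hs: "\<forall>i<m. subgroup (Hs i) H \<and> Hs i \<noteq> carrier H
      \<and> (\<exists>s. local_section G H f (Hs i) s)"
    and U: "(\<Union>i<m. Hs i) = carrier H" and m0: "m > 0"
    using sc unfolding sec_cover_def by blast
  define M where "M i = Hs i \<times> carrier K" for i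
  have "\<forall>i<m. subgroup (M i) (H \<times>\<times> K) \<and> M i \<noteq> carrier (H \<times>\<times> K)
     \<and> (\<exists>s. local_section (G \<times>\<times> K) (H \<times>\<times> K) (prod_map f (\<lambda>x. x)) (M i) s)"
  proof (intro allI impI conjI)
    fix i assume i: "i < m"
    have sg: "subgroup (Hs i) H" using Hs i by blast
    show "subgroup (M i) (H \<times>\<times> K)" unfolding M_def
      by (rule DirProd_subgroups[OF H sg K K.subgroup_self])
    have sub: "Hs i \<subseteq> carrier H" using subgroup.subset[OF sg] .
    have "Hs i \<noteq> carrier H" using Hs i by blast
    then obtain h where "h \<in> carrier H" "h \<notin> Hs i" using sub by blast
    hence "(h, \<one>\<^bsub>K\<^esub>) \<in> carrier (H \<times>\<times> K)" "(h, \<one>\<^bsub>K\<^esub>) \<notin> M i" unfolding M_def by auto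
    thus "M i \<noteq> carrier (H \<times>\<times> K)" by blast
    obtain s where s: "local_section G H f (Hs i) s" using Hs i by blast
    have shom: "s \<in> hom (H\<lparr>carrier := Hs i\<rparr>) G" and sinv: "\<forall>x\<in>Hs i. f (s x) = x"
      using s unfolding local_section_def by auto
    have smul: "s (x \<otimes>\<^bsub>H\<^esub> y) = s x \<otimes>\<^bsub>G\<^esub> s y" if "x \<in> Hs i" "y \<in> Hs i" for x y
      using shom that unfolding hom_def by auto
    have scar: "s x \<in> carrier G" if "x \<in> Hs i" for x
      using shom that unfolding hom_def by auto
    define t where "t p = (s (fst p), snd p)" for p :: "'h \<times> 'k"
    have "local_section (G \<times>\<times> K) (H \<times>\<times> K) (prod_map f (\<lambda>x. x)) (M i) t"
      unfolding local_section_def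
    proof (intro conjI ballI)
      show "t \<in> hom ((H \<times>\<times> K)\<lparr>carrier := M i\<rparr>) (G \<times>\<times> K)"
      proof (rule homI)
        fix x assume "x \<in> carrier ((H \<times>\<times> K)\<lparr>carrier := M i\<rparr>)"
        thus "t x \<in> carrier (G \<times>\<times> K)" using scar unfolding t_def M_def by force
      next
        fix x y assume "x \<in> carrier ((H \<times>\<times> K)\<lparr>carrier := M i\<rparr>)" "y \<in> carrier ((H \<times>\<times> K)\<lparr>carrier := M i\<rparr>)"
        thus "t (x \<otimes>\<^bsub>(H \<times>\<times> K)\<lparr>carrier := M i\<rparr>\<^esub> y) = t x \<otimes>\<^bsub>G \<times>\<times> K\<^esub> t y"
          unfolding t_def M_def by (auto simp: mult_DirProd' smul)
      qed
    next
      fix x assume "x \<in> M i"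
      thus "prod_map f (\<lambda>x. x) (t x) = x" using sinv unfolding t_def M_def prod_map_def by auto
    qed
    thus "\<exists>s. local_section (G \<times>\<times> K) (H \<times>\<times> K) (prod_map f (\<lambda>x. x)) (M i) s" by blast
  qed
  moreover have "(\<Union>i<m. M i) = carrier (H \<times>\<times> K)"
    using U unfolding M_def by auto
  ultimately show ?thesis unfolding sec_cover_def using m0 by blast
qed

theorem theorem3p4:
  fixes G1 :: "('a, 'm1) monoid_scheme" and H1 :: "('b, 'n1) monoid_scheme"
    and G2 :: "('c, 'm2) monoid_scheme" and H2 :: "('d, 'n2) monoid_scheme"
    and f1 :: "'a \<Rightarrow> 'b" and f2 :: "'c \<Rightarrow> 'd"
    and G :: "('e, 'm3) monoid_scheme" and H :: "('g, 'n3) monoid_scheme"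
    and K :: "('k, 'm4) monoid_scheme" and f :: "'e \<Rightarrow> 'g"
  shows
   "(group G1 \<and> group H1 \<and> group G2 \<and> group H2 \<and> f1 \<in> hom G1 H1 \<and> f2 \<in> hom G2 H2 \<longrightarrow>
      ((\<not> (\<exists>s. global_section G1 H1 f1 s)) \<longrightarrow>
          sectional_number G1 H1 f1 \<le> sectional_number (G1 \<times>\<times> G2) (H1 \<times>\<times> H2) (prod_map f1 f2))
    \<and> ((\<not> (\<exists>s. global_section G2 H2 f2 s)) \<longrightarrow>
          sectional_number G2 H2 f2 \<le> sectional_number (G1 \<times>\<times> G2) (H1 \<times>\<times> H2) (prod_map f1 f2)))
    \<and>
    (group G \<and> group H \<and> group K \<and> f \<in> hom G H \<longrightarrow>
      sectional_number (G \<times>\<times> K) (H \<times>\<times> K) (prod_map f (\<lambda>x. x)) \<le> sectional_number G H f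
    \<and> ((\<not> (\<exists>s. global_section G H f s)) \<longrightarrow>
          sectional_number (G \<times>\<times> K) (H \<times>\<times> K) (prod_map f (\<lambda>x. x)) = sectional_number G H f))"
proof (intro conjI impI)
  assume a: "group G1 \<and> group H1 \<and> group G2 \<and> group H2 \<and> f1 \<in> hom G1 H1 \<and> f2 \<in> hom G2 H2"
  {
    assume "\<not> (\<exists>s. global_section G1 H1 f1 s)"
    thus "sectional_number G1 H1 f1 \<le> sectional_number (G1 \<times>\<times> G2) (H1 \<times>\<times> H2) (prod_map f1 f2)"
      using a by - (rule sec_mono, rule part1a, auto)
  next
    assume "\<not> (\<exists>s. global_section G2 H2 f2 s)"
    thus "sectional_number G2 H2 f2 \<le> sectional_number (G1 \<times>\<times> G2) (H1 \<times>\<times> H2) (prod_map f1 f2)"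
      using a by - (rule sec_mono, rule part1b, auto)
  }
next
  assume a: "group G \<and> group H \<and> group K \<and> f \<in> hom G H"
  show le: "sectional_number (G \<times>\<times> K) (H \<times>\<times> K) (prod_map f (\<lambda>x. x)) \<le> sectional_number G H f"
    using a by - (rule sec_mono, rule part2, auto)
  assume "\<not> (\<exists>s. global_section G H f s)"
  have "sectional_number G H f \<le> sectional_number (G \<times>\<times> K) (H \<times>\<times> K) (prod_map f (\<lambda>x. x))"
  proof (rule sec_mono)
    fix m assume "sec_cover (G \<times>\<times> K) (H \<times>\<times> K) (prod_map f (\<lambda>x. x)) m"
    thus "sec_cover G H f m" using a \<open>\<not> (\<exists>s. global_section G H f s)\<close> part1a[of G H K K f] by blast
  qed
  thus "sectional_number (G \<times>\<times> K) (H \<times>\<times> K) (prod_map f (\<lambda>x. x)) = sectional_number G H f"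
    using le by (rule antisym[rotated])
qed

end
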